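(* Let $\mathbb{F}$ be a field with $\mathrm{Char}(\mathbb{F})=3$. Every $2$-dimensional diassociative algebra $(V,\dashv,\vdash)$ over $\mathbb{F}$ whose product $\dashv$ is not identically zero is isomorphic to one of the following dialgebras $\{A,B\}$ (for some value of the indicated parameter), and dialgebras from different items are pairwise non-isomorphic: <ol> <li>$D_{13,3}^1(\delta_1)$: $A=\begin{pmatrix}0&0&0&0\\1&0&0&0\end{pmatrix}$, $B=\begin{pmatrix}0&0&0&0\\ \delta_1&0&0&0\end{pmatrix}$, $\delta_1\in\mathbb{F}$;</li> <li>$D_{3,3}^2$: $A=B=\begin{pmatrix}1&0&0&0\\0&0&0&0\end{pmatrix}$;</li> <li>$D_{3,3}^3$: $A=\begin{pmatrix}1&0&0&0\\0&0&0&0\end{pmatrix}$, $B=\begin{pmatrix}1&0&0&0\\0&1&0&0\end{pmatrix}$;</li> <li>$D_{3,3}^4$: $A=B=\begin{pmatrix}1&0&0&0\\0&1&0&0\end{pmatrix}$;</li> <li>$D_{3,3}^5(\delta_1)$: $A=\begin{pmatrix}2&0&0&0\\0&0&2&0\end{pmatrix}$, $B=\begin{pmatrix}2&0&0&0\\ \delta_1&0&0&0\end{pmatrix}$, $\delta_1\in\mathbb{F}$;</li> <li>$D_{3,3}^6$: $A=\begin{pmatrix}2&0&0&0\\0&0&2&0\end{pmatrix}$, $B=\begin{pmatrix}2&0&0&0\\0&2&0&0\end{pmatrix}$;</li> <li>$D_{3,3}^7$: $A=B=\begin{pmatrix}2&0&0&0\\0&0&2&0\end{pmatrix}$;</li>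 <li>$D_{3,3}^8(\alpha_4)$: $A=B=\begin{pmatrix}2&0&0&\alpha_4\\0&2&2&0\end{pmatrix}$, $\alpha_4\in\mathbb{F}$.</li> </ol>
   Context: Let $\mathbb{F}$ be a field. A diassociative algebra (associative dialgebra) is a vector space $V$ over $\mathbb{F}$ with two bilinear products $\dashv,\vdash$ satisfying, for all $x,y,z\in V$: $(x\dashv y)\dashv z=x\dashv(y\dashv z)$; $x\dashv(y\dashv z)=x\dashv(y\vdash z)$; $(x\vdash y)\dashv z=x\vdash(y\dashv z)$; $(x\dashv y)\vdash z=(x\vdash y)\vdash z$; $(x\vdash y)\vdash z=x\vdash(y\vdash z)$. Two such dialgebras are isomorphic if there is an invertible linear map $f$ with $f(x\dashv y)=f(x)\dashv' f(y)$ and $f(x\vdash y)=f(x)\vdash' f(y)$ for all $x,y$. For $\dim V=2$ with fixed basis $(e_1,e_2)$, a $2\times4$ matrix $\begin{pmatrix}\alpha_1&\alpha_2&\alpha_3&\alpha_4\\ \beta_1&\beta_2&\beta_3&\beta_4\end{pmatrix}$ encodes a bilinear product $\ast$ by $e_1\ast e_1=\alpha_1e_1+\beta_1e_2$, $e_1\ast e_2=\alpha_2e_1+\beta_2e_2$, $e_2\ast e_1=\alpha_3e_1+\beta_3e_2$, $e_2\ast e_2=\alpha_4e_1+\beta_4e_2$. A pair $\{A,B\}$ denotes the dialgebra whose product $\dashv$ is encoded by $A$ and whose product $\vdash$ is encoded by $B$. *)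

theory Defs
  imports Main
begin

text \<open>A bilinear product is encoded by its 2x4 structure-constant matrix
  (alpha1..alpha4 in the first row, beta1..beta4 in the second).\<close>

datatype 'a sc = SC (al1: 'a) (al2: 'a) (al3: 'a) (al4: 'a)
                    (be1: 'a) (be2: 'a) (be3: 'a) (be4: 'a)

definition scmul :: "'a::field sc \<Rightarrow> 'a \<times> 'a \<Rightarrow> 'a \<times> 'a \<Rightarrow> 'a \<times> 'a" where
  "scmul M x y =
     (fst x * fst y * al1 M + fst x * snd y * al2 M + snd x * fst y * al3 M + snd x * snd y * al4 M,
      fst x * fst y * be1 M + fst x * snd y * be2 M + snd x * fst y * be3 M + snd x * snd y * be4 M)"

text \<open>Diassociativity of the pair {A,B}: A encodes the left product, B the right one.\<close>
definition diassociative :: "'a::field sc \<Rightarrow> 'a sc \<Rightarrow> bool" where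
  "diassociative A B \<longleftrightarrow> (\<forall>x y z.
      scmul A (scmul A x y) z = scmul A x (scmul A y z) \<and>
      scmul A x (scmul A y z) = scmul A x (scmul B y z) \<and>
      scmul A (scmul B x y) z = scmul B x (scmul A y z) \<and>
      scmul B (scmul A x y) z = scmul B (scmul B x y) z \<and>
      scmul B (scmul B x y) z = scmul B x (scmul B y z))"

definition linmap :: "'a::field \<Rightarrow> 'a \<Rightarrow> 'a \<Rightarrow> 'a \<Rightarrow> 'a \<times> 'a \<Rightarrow> 'a \<times> 'a" where
  "linmap a b c d x = (a * fst x + b * snd x, c * fst x + d * snd x)"

definition dialg_iso :: "'a::field sc \<times> 'a sc \<Rightarrow> 'a sc \<times> 'a sc \<Rightarrow> bool" where
  "dialg_iso D D' \<longleftrightarrow> (\<exists>a b c d. a * d - b * c \<noteq> 0 \<and>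
      (\<forall>x y. linmap a b c d (scmul (fst D) x y) = scmul (fst D') (linmap a b c d x) (linmap a b c d y) \<and>
             linmap a b c d (scmul (snd D) x y) = scmul (snd D') (linmap a b c d x) (linmap a b c d y)))"

text \<open>The list of the theorem: item k with parameter t (ignored for parameter-free items).\<close>
definition char3_family :: "nat \<Rightarrow> 'a::field \<Rightarrow> 'a sc \<times> 'a sc" where
  "char3_family k t =
    (if k = 1 then (SC 0 0 0 0 1 0 0 0, SC 0 0 0 0 t 0 0 0)
     else if k = 2 then (SC 1 0 0 0 0 0 0 0, SC 1 0 0 0 0 0 0 0)
     else if k = 3 then (SC 1 0 0 0 0 0 0 0, SC 1 0 0 0 0 1 0 0)
     else if k = 4 then (SC 1 0 0 0 0 1 0 0, SC 1 0 0 0 0 1 0 0)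
     else if k = 5 then (SC 2 0 0 0 0 0 2 0, SC 2 0 0 0 t 0 0 0)
     else if k = 6 then (SC 2 0 0 0 0 0 2 0, SC 2 0 0 0 0 2 0 0)
     else if k = 7 then (SC 2 0 0 0 0 0 2 0, SC 2 0 0 0 0 0 2 0)
     else if k = 8 then (SC 2 0 0 t 0 2 2 0, SC 2 0 0 t 0 2 2 0)
     else (SC 0 0 0 0 0 0 0 0, SC 0 0 0 0 0 0 0 0))"

definition in_item :: "nat \<Rightarrow> 'a::field sc \<times> 'a sc \<Rightarrow> bool" where
  "in_item k D \<longleftrightarrow> (\<exists>t. D = char3_family k t)"

end

theory Submission
  imports Defs
begin


definition dt :: "'a::field \<times> 'a \<Rightarrow> 'a \<times> 'a \<Rightarrow> 'a" where
  "dt u v = fst u * snd v - snd u * fst v"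

definition crd :: "'a::field \<times> 'a \<Rightarrow> 'a \<times> 'a \<Rightarrow> 'a \<times> 'a \<Rightarrow> 'a \<times> 'a" where
  "crd u v w = ((snd v * fst w - fst v * snd w) / dt u v, (fst u * snd w - snd u * fst w) / dt u v)"

definition comb :: "'a::field \<times> 'a \<Rightarrow> 'a \<times> 'a \<Rightarrow> 'a \<times> 'a \<Rightarrow> 'a \<times> 'a" where
  "comb u v p = (fst p * fst u + snd p * fst v, fst p * snd u + snd p * snd v)"

definition cb :: "'a::field \<times> 'a \<Rightarrow> 'a \<times> 'a \<Rightarrow> 'a sc \<Rightarrow> 'a sc" where
  "cb u v M = SC (fst (crd u v (scmul M u u))) (fst (crd u v (scmul M u v)))
                 (fst (crd u v (scmul M v u))) (fst (crd u v (scmul M v v)))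
                 (snd (crd u v (scmul M u u))) (snd (crd u v (scmul M u v)))
                 (snd (crd u v (scmul M v u))) (snd (crd u v (scmul M v v)))"

lemma comb_crd: "dt u v \<noteq> 0 \<Longrightarrow> comb u v (crd u v x) = x"
  apply (cases u, cases v, cases x)
  apply (simp add: comb_def crd_def)
  apply (simp add: field_simps)
  apply (simp add: dt_def algebra_simps)
  done

lemma crd_comb: "dt u v \<noteq> 0 \<Longrightarrow> crd u v (comb u v x) = x"
  apply (cases u, cases v, cases x)
  apply (simp add: comb_def crd_def)
  apply (simp add: field_simps)
  apply (simp add: dt_def algebra_simps)
  done

lemma crd_hom0:
  assumes "dt u v \<noteq> 0"
  shows "crd u v (scmul M (comb u v p) (comb u v q)) = scmul (cb u v M) p q"
  using assms
  apply (cases u, cases v, cases p, cases q)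
  apply (simp add: crd_def cb_def scmul_def comb_def)
  apply (simp add: field_simps)
  done

lemma crd_hom:
  assumes "dt u v \<noteq> 0"
  shows "crd u v (scmul M x y) = scmul (cb u v M) (crd u v x) (crd u v y)"
  using crd_hom0[OF assms, of M "crd u v x" "crd u v y"] comb_crd[OF assms] by simp



lemma dia_inst:
  assumes "diassociative A B"
  shows "\<And>x y z. scmul A (scmul A x y) z = scmul A x (scmul A y z) \<and>
      scmul A x (scmul A y z) = scmul A x (scmul B y z) \<and>
      scmul A (scmul B x y) z = scmul B x (scmul A y z) \<and>
      scmul B (scmul A x y) z = scmul B (scmul B x y) z \<and>
      scmul B (scmul B x y) z = scmul B x (scmul B y z)"
  using assms unfolding diassociative_def by blast

lemma linmap_comp: "linmap a b c d (linmap a' b' c' d' x) =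
   linmap (a*a'+b*c') (a*b'+b*d') (c*a'+d*c') (c*b'+d*d') x"
  by (cases x) (simp add: linmap_def algebra_simps)

lemma iso_trans:
  assumes "dialg_iso D1 D2" "dialg_iso D2 D3"
  shows "dialg_iso D1 D3"
proof -
  obtain a b c d where h1: "a * d - b * c \<noteq> 0"
    "\<forall>x y. linmap a b c d (scmul (fst D1) x y) = scmul (fst D2) (linmap a b c d x) (linmap a b c d y) \<and>
             linmap a b c d (scmul (snd D1) x y) = scmul (snd D2) (linmap a b c d x) (linmap a b c d y)"
    using assms(1) unfolding dialg_iso_def by blast
  obtain a' b' c' d' where h2: "a' * d' - b' * c' \<noteq> 0"
    "\<forall>x y. linmap a' b' c' d' (scmul (fst D2) x y) = scmul (fst D3) (linmap a' b' c' d' x) (linmap a' b' c' d' y) \<and>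
             linmap a' b' c' d' (scmul (snd D2) x y) = scmul (snd D3) (linmap a' b' c' d' x) (linmap a' b' c' d' y)"
    using assms(2) unfolding dialg_iso_def by blast
  have det: "(a'*a+b'*c) * (c'*b+d'*d) - (a'*b+b'*d) * (c'*a+d'*c) = (a' * d' - b' * c') * (a * d - b * c)"
    by (simp add: algebra_simps)
  have "\<forall>x y. linmap (a'*a+b'*c) (a'*b+b'*d) (c'*a+d'*c) (c'*b+d'*d) (scmul (fst D1) x y) =
     scmul (fst D3) (linmap (a'*a+b'*c) (a'*b+b'*d) (c'*a+d'*c) (c'*b+d'*d) x) (linmap (a'*a+b'*c) (a'*b+b'*d) (c'*a+d'*c) (c'*b+d'*d) y) \<and>
     linmap (a'*a+b'*c) (a'*b+b'*d) (c'*a+d'*c) (c'*b+d'*d) (scmul (snd D1) x y) =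
     scmul (snd D3) (linmap (a'*a+b'*c) (a'*b+b'*d) (c'*a+d'*c) (c'*b+d'*d) x) (linmap (a'*a+b'*c) (a'*b+b'*d) (c'*a+d'*c) (c'*b+d'*d) y)"
  proof (intro allI)
    fix x y
    show "linmap (a'*a+b'*c) (a'*b+b'*d) (c'*a+d'*c) (c'*b+d'*d) (scmul (fst D1) x y) =
     scmul (fst D3) (linmap (a'*a+b'*c) (a'*b+b'*d) (c'*a+d'*c) (c'*b+d'*d) x) (linmap (a'*a+b'*c) (a'*b+b'*d) (c'*a+d'*c) (c'*b+d'*d) y) \<and>
     linmap (a'*a+b'*c) (a'*b+b'*d) (c'*a+d'*c) (c'*b+d'*d) (scmul (snd D1) x y) =
     scmul (snd D3) (linmap (a'*a+b'*c) (a'*b+b'*d) (c'*a+d'*c) (c'*b+d'*d) x) (linmap (a'*a+b'*c) (a'*b+b'*d) (c'*a+d'*c) (c'*b+d'*d) y)"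
      unfolding linmap_comp[symmetric] using h1(2)[rule_format, of x y] h2(2)[rule_format, of "linmap a b c d x" "linmap a b c d y"]
      by simp
  qed
  then show ?thesis unfolding dialg_iso_def using h1(1) h2(1) det by (intro exI[of _ "a'*a+b'*c"] exI[of _ "a'*b+b'*d"] exI[of _ "c'*a+d'*c"] exI[of _ "c'*b+d'*d"]) simp
qed

lemma iso_of: "a*d - b*c \<noteq> 0 \<Longrightarrow> (\<And>x y. linmap a b c d (scmul A x y) = scmul A' (linmap a b c d x) (linmap a b c d y))
  \<Longrightarrow> (\<And>x y. linmap a b c d (scmul B x y) = scmul B' (linmap a b c d x) (linmap a b c d y)) \<Longrightarrow> dialg_iso (A,B) (A',B')"
  unfolding dialg_iso_def by (intro exI[of _ a] exI[of _ b] exI[of _ c] exI[of _ d]) simp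

lemma crd_linmap: "dt u v \<noteq> 0 \<Longrightarrow> crd u v = linmap (snd v / dt u v) (- fst v / dt u v) (- snd u / dt u v) (fst u / dt u v)"
  by (rule ext) (simp add: crd_def linmap_def diff_divide_distrib)

lemma iso_cb:
  assumes "dt u v \<noteq> 0"
  shows "dialg_iso (A, B) (cb u v A, cb u v B)"
proof -
  obtain D where D: "D = dt u v" by blast
  have "D \<noteq> 0" using assms D by simp
  have "(snd v / D) * (fst u / D) - (- fst v / D) * (- snd u / D) = (fst u * snd v - snd u * fst v) / (D * D)"
    using \<open>D \<noteq> 0\<close> by (simp add: field_simps)
  also have "\<dots> = 1 / D" using assms D by (simp add: dt_def)
  finally have "(snd v / dt u v) * (fst u / dt u v) - (- fst v / dt u v) * (- snd u / dt u v) = 1 / dt u v" using D by simp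
  then have "(snd v / dt u v) * (fst u / dt u v) - (- fst v / dt u v) * (- snd u / dt u v) \<noteq> 0"
    using assms by simp
  then show ?thesis
    apply (rule iso_of)
    unfolding crd_linmap[OF assms, symmetric] using crd_hom[OF assms] by auto
qed

lemma diassoc_cb:
  assumes "dt u v \<noteq> 0" "diassociative A B"
  shows "diassociative (cb u v A) (cb u v B)"
  unfolding diassociative_def
proof (intro allI)
  fix x y z
  have ex: "\<And>w. w = crd u v (comb u v w)" using crd_comb[OF assms(1)] by simp
  obtain x0 y0 z0 where xyz: "x = crd u v x0" "y = crd u v y0" "z = crd u v z0" using ex by blast
  show "scmul (cb u v A) (scmul (cb u v A) x y) z = scmul (cb u v A) x (scmul (cb u v A) y z) \<and>
       scmul (cb u v A) x (scmul (cb u v A) y z) = scmul (cb u v A) x (scmul (cb u v B) y z) \<and>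
       scmul (cb u v A) (scmul (cb u v B) x y) z = scmul (cb u v B) x (scmul (cb u v A) y z) \<and>
       scmul (cb u v B) (scmul (cb u v A) x y) z = scmul (cb u v B) (scmul (cb u v B) x y) z \<and>
       scmul (cb u v B) (scmul (cb u v B) x y) z = scmul (cb u v B) x (scmul (cb u v B) y z)"
    unfolding xyz using dia_inst[OF assms(2), of x0 y0 z0]
    by (simp add: crd_hom[OF assms(1), symmetric])
qed

definition G :: "'a::field sc \<Rightarrow> 'a sc \<Rightarrow> bool" where
  "G A B \<longleftrightarrow> (\<exists>k \<in> {1..8}. \<exists>D. in_item k D \<and> dialg_iso (A, B) D)"

lemma G_iso: "dialg_iso (A, B) (A', B') \<Longrightarrow> G A' B' \<Longrightarrow> G A B"
  unfolding G_def using iso_trans by blast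

lemma G_cb: "dt u v \<noteq> 0 \<Longrightarrow> G (cb u v A) (cb u v B) \<Longrightarrow> G A B"
  using G_iso iso_cb by blast

lemma iso_refl: "dialg_iso D D"
  unfolding dialg_iso_def
  by (rule exI[of _ 1], rule exI[of _ 0], rule exI[of _ 0], rule exI[of _ 1]) (simp add: linmap_def)

lemma G_item: "k \<in> {1..8} \<Longrightarrow> (A, B) = char3_family k t \<Longrightarrow> G A B"
  unfolding G_def in_item_def using iso_refl by metis



lemma dia_all:
  assumes "diassociative A B"
  shows "(scmul A (scmul A (1,0) (1,0)) (1,0) = scmul A (1,0) (scmul A (1,0) (1,0)) \<and>
      scmul A (1,0) (scmul A (1,0) (1,0)) = scmul A (1,0) (scmul B (1,0) (1,0)) \<and>
      scmul A (scmul B (1,0) (1,0)) (1,0) = scmul B (1,0) (scmul A (1,0) (1,0)) \<and>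
      scmul B (scmul A (1,0) (1,0)) (1,0) = scmul B (scmul B (1,0) (1,0)) (1,0) \<and>
      scmul B (scmul B (1,0) (1,0)) (1,0) = scmul B (1,0) (scmul B (1,0) (1,0))) \<and>
  (scmul A (scmul A (1,0) (1,0)) (0,1) = scmul A (1,0) (scmul A (1,0) (0,1)) \<and>
      scmul A (1,0) (scmul A (1,0) (0,1)) = scmul A (1,0) (scmul B (1,0) (0,1)) \<and>
      scmul A (scmul B (1,0) (1,0)) (0,1) = scmul B (1,0) (scmul A (1,0) (0,1)) \<and>
      scmul B (scmul A (1,0) (1,0)) (0,1) = scmul B (scmul B (1,0) (1,0)) (0,1) \<and>
      scmul B (scmul B (1,0) (1,0)) (0,1) = scmul B (1,0) (scmul B (1,0) (0,1))) \<and>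
  (scmul A (scmul A (1,0) (0,1)) (1,0) = scmul A (1,0) (scmul A (0,1) (1,0)) \<and>
      scmul A (1,0) (scmul A (0,1) (1,0)) = scmul A (1,0) (scmul B (0,1) (1,0)) \<and>
      scmul A (scmul B (1,0) (0,1)) (1,0) = scmul B (1,0) (scmul A (0,1) (1,0)) \<and>
      scmul B (scmul A (1,0) (0,1)) (1,0) = scmul B (scmul B (1,0) (0,1)) (1,0) \<and>
      scmul B (scmul B (1,0) (0,1)) (1,0) = scmul B (1,0) (scmul B (0,1) (1,0))) \<and>
  (scmul A (scmul A (1,0) (0,1)) (0,1) = scmul A (1,0) (scmul A (0,1) (0,1)) \<and>
      scmul A (1,0) (scmul A (0,1) (0,1)) = scmul A (1,0) (scmul B (0,1) (0,1)) \<and>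
      scmul A (scmul B (1,0) (0,1)) (0,1) = scmul B (1,0) (scmul A (0,1) (0,1)) \<and>
      scmul B (scmul A (1,0) (0,1)) (0,1) = scmul B (scmul B (1,0) (0,1)) (0,1) \<and>
      scmul B (scmul B (1,0) (0,1)) (0,1) = scmul B (1,0) (scmul B (0,1) (0,1))) \<and>
  (scmul A (scmul A (0,1) (1,0)) (1,0) = scmul A (0,1) (scmul A (1,0) (1,0)) \<and>
      scmul A (0,1) (scmul A (1,0) (1,0)) = scmul A (0,1) (scmul B (1,0) (1,0)) \<and>
      scmul A (scmul B (0,1) (1,0)) (1,0) = scmul B (0,1) (scmul A (1,0) (1,0)) \<and>
      scmul B (scmul A (0,1) (1,0)) (1,0) = scmul B (scmul B (0,1) (1,0)) (1,0) \<and>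
      scmul B (scmul B (0,1) (1,0)) (1,0) = scmul B (0,1) (scmul B (1,0) (1,0))) \<and>
  (scmul A (scmul A (0,1) (1,0)) (0,1) = scmul A (0,1) (scmul A (1,0) (0,1)) \<and>
      scmul A (0,1) (scmul A (1,0) (0,1)) = scmul A (0,1) (scmul B (1,0) (0,1)) \<and>
      scmul A (scmul B (0,1) (1,0)) (0,1) = scmul B (0,1) (scmul A (1,0) (0,1)) \<and>
      scmul B (scmul A (0,1) (1,0)) (0,1) = scmul B (scmul B (0,1) (1,0)) (0,1) \<and>
      scmul B (scmul B (0,1) (1,0)) (0,1) = scmul B (0,1) (scmul B (1,0) (0,1))) \<and>
  (scmul A (scmul A (0,1) (0,1)) (1,0) = scmul A (0,1) (scmul A (0,1) (1,0)) \<and>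
      scmul A (0,1) (scmul A (0,1) (1,0)) = scmul A (0,1) (scmul B (0,1) (1,0)) \<and>
      scmul A (scmul B (0,1) (0,1)) (1,0) = scmul B (0,1) (scmul A (0,1) (1,0)) \<and>
      scmul B (scmul A (0,1) (0,1)) (1,0) = scmul B (scmul B (0,1) (0,1)) (1,0) \<and>
      scmul B (scmul B (0,1) (0,1)) (1,0) = scmul B (0,1) (scmul B (0,1) (1,0))) \<and>
  (scmul A (scmul A (0,1) (0,1)) (0,1) = scmul A (0,1) (scmul A (0,1) (0,1)) \<and>
      scmul A (0,1) (scmul A (0,1) (0,1)) = scmul A (0,1) (scmul B (0,1) (0,1)) \<and>
      scmul A (scmul B (0,1) (0,1)) (0,1) = scmul B (0,1) (scmul A (0,1) (0,1)) \<and>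
      scmul B (scmul A (0,1) (0,1)) (0,1) = scmul B (scmul B (0,1) (0,1)) (0,1) \<and>
      scmul B (scmul B (0,1) (0,1)) (0,1) = scmul B (0,1) (scmul B (0,1) (0,1)))"
  using dia_inst[OF assms, of "(1,0)" "(1,0)" "(1,0)"] dia_inst[OF assms, of "(1,0)" "(1,0)" "(0,1)"] dia_inst[OF assms, of "(1,0)" "(0,1)" "(1,0)"] dia_inst[OF assms, of "(1,0)" "(0,1)" "(0,1)"] dia_inst[OF assms, of "(0,1)" "(1,0)" "(1,0)"] dia_inst[OF assms, of "(0,1)" "(1,0)" "(0,1)"] dia_inst[OF assms, of "(0,1)" "(0,1)" "(1,0)"] dia_inst[OF assms, of "(0,1)" "(0,1)" "(0,1)"] by simp

lemma c3_two: "(3::'a::field) = 0 \<Longrightarrow> (2::'a) = -1"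
proof -
  assume "(3::'a) = 0"
  have "(2::'a) = 3 - 1" by simp
  then show ?thesis using \<open>(3::'a) = 0\<close> by simp
qed

lemma dia3: "diassociative A B \<Longrightarrow> scmul A (scmul B x y) z = scmul B x (scmul A y z)"
  and dia4: "diassociative A B \<Longrightarrow> scmul B (scmul A x y) z = scmul B (scmul B x y) z"
  and dia5: "diassociative A B \<Longrightarrow> scmul B (scmul B x y) z = scmul B x (scmul B y z)"
  and dia1: "diassociative A B \<Longrightarrow> scmul A (scmul A x y) z = scmul A x (scmul A y z)"
  and dia2: "diassociative A B \<Longrightarrow> scmul A x (scmul A y z) = scmul A x (scmul B y z)"
  unfolding diassociative_def by blast+

lemma B_N1:
  assumes "diassociative (SC 0 0 0 0 1 0 0 0) (SC p1 p2 p3 p4 q1 q2 q3 q4)"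
  shows "p1 = 0 \<and> p2 = 0 \<and> p3 = 0 \<and> p4 = 0 \<and> q2 = 0 \<and> q3 = 0 \<and> q4 = 0"
  using dia_all[OF assms] apply (simp add: scmul_def) apply (elim conjE) apply simp done

lemma B_N2:
  assumes "diassociative (SC 1 0 0 0 0 0 0 0) (SC p1 p2 p3 p4 q1 q2 q3 q4)"
  shows "p1 = 1 \<and> p2 = 0 \<and> p3 = 0 \<and> p4 = 0 \<and> q1 = 0 \<and> q3 = 0 \<and> q4 = 0 \<and> (q2 = 0 \<or> q2 = 1)"
  using dia_all[OF assms] apply (simp add: scmul_def) apply (elim conjE) apply simp done

lemma B_N3:
  assumes "diassociative (SC 1 0 0 0 0 1 0 0) (SC p1 p2 p3 p4 q1 q2 q3 q4)"
  shows "p1 = 1 \<and> p2 = 0 \<and> p3 = 0 \<and> p4 = 0 \<and> q1 = 0 \<and> q2 = 1 \<and> q3 = 0 \<and> q4 = 0"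
  using dia_all[OF assms] by (simp add: scmul_def, (elim conjE)?, (simp add: minus_equation_iff)?)

lemma B_N5:
  assumes "diassociative (SC (-1) 0 0 t 0 (-1) (-1) 0) (SC p1 p2 p3 p4 q1 q2 q3 q4)"
  shows "p1 = -1 \<and> p2 = 0 \<and> p3 = 0 \<and> p4 = t \<and> q1 = 0 \<and> q2 = -1 \<and> q3 = -1 \<and> q4 = 0"
  using dia_all[OF assms] by (simp add: scmul_def, (elim conjE)?, (simp add: minus_equation_iff)?)

lemma B_N4:
  fixes p1 p2 p3 p4 q1 q2 q3 q4 :: "'a::field"
  assumes "diassociative (SC (-1) 0 0 0 0 0 (-1) 0) (SC p1 p2 p3 p4 q1 q2 q3 q4)" "(3::'a) = 0"
  shows "p1 = -1 \<and> p2 = 0 \<and> p3 = 0 \<and> p4 = 0 \<and> q4 = 0 \<and>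
    ((q1 = 0 \<and> q2 = 0 \<and> q3 = -1) \<or> (q2 = 0 \<and> q3 = 0) \<or> (q1 = 0 \<and> q2 = -1 \<and> q3 = 0))"
proof -
  have h: "p1 = -1 \<and> p2 = 0 \<and> p3 = 0 \<and> p4 = 0 \<and> q4 = 0"
    using dia_all[OF assms(1)] by (simp add: scmul_def, (elim conjE)?, (simp add: minus_equation_iff scmul_def)?)
  have e1: "q1 = 0 \<or> q3 = 0" using dia4[OF assms(1), of "(1,0)" "(1,0)" "(1,0)"] h by (simp add: scmul_def)
  have e1': "q1 = 0 \<or> q3 = q2" using dia5[OF assms(1), of "(1,0)" "(1,0)" "(1,0)"] h by (simp add: scmul_def)
  have e2: "- q3 = q3*q3" using dia4[OF assms(1), of "(0,1)" "(1,0)" "(1,0)"] h by (simp add: scmul_def)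
  have e3: "q2 = 0 \<or> q3 = 0" using dia4[OF assms(1), of "(1,0)" "(0,1)" "(1,0)"] h by (simp add: scmul_def)
  have e4: "- q2 = q2*q2" using dia5[OF assms(1), of "(1,0)" "(1,0)" "(0,1)"] h by (simp add: scmul_def)
  note e = e1 e1' e2 e3 e4
  have sq: "\<And>x::'a. - x = x * x \<Longrightarrow> x = 0 \<or> x = -1"
  proof -
    fix x :: 'a assume "- x = x * x"
    moreover have "x * (x + 1) = x * x + x" by (simp add: distrib_left)
    ultimately have "x * (x + 1) = - x + x" by simp
    then have "x * (x + 1) = 0" by simp
    then have "x = 0 \<or> x + 1 = 0" by simp
    then show "x = 0 \<or> x = -1" using eq_neg_iff_add_eq_0[of x 1] by blast
  qed
  have c3: "q3 = 0 \<or> q3 = -1" using sq[OF e2] .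
  have c2: "q2 = 0 \<or> q2 = -1" using sq[OF e4] .
  show ?thesis
  proof (cases "q3 = 0")
    case True
    then show ?thesis using c2 e h by (cases "q2 = 0") simp_all
  next
    case False
    then have "q3 = -1" using c3 by simp
    then show ?thesis using e h False by simp
  qed
qed


lemma G_N1:
  assumes "diassociative (SC 0 0 0 0 1 0 0 0) B"
  shows "G (SC 0 0 0 0 1 0 0 0) B"
proof (cases B)
  case (SC p1 p2 p3 p4 q1 q2 q3 q4)
  then show ?thesis using B_N1[of p1 p2 p3 p4 q1 q2 q3 q4] assms
    by (intro G_item[of 1 _ _ q1]) (auto simp: char3_family_def)
qed

lemma G_N2:
  assumes "diassociative (SC 1 0 0 0 0 0 0 0) B"
  shows "G (SC 1 0 0 0 0 0 0 0) B"
proof (cases B)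
  case (SC p1 p2 p3 p4 q1 q2 q3 q4)
  then have h: "p1 = 1 \<and> p2 = 0 \<and> p3 = 0 \<and> p4 = 0 \<and> q1 = 0 \<and> q3 = 0 \<and> q4 = 0 \<and> (q2 = 0 \<or> q2 = 1)"
    using B_N2[of p1 p2 p3 p4 q1 q2 q3 q4] assms by simp
  show ?thesis
  proof (cases "q2 = 0")
    case True
    then show ?thesis using h SC by (intro G_item[of 2 _ _ 0]) (auto simp: char3_family_def)
  next
    case False
    then show ?thesis using h SC by (intro G_item[of 3 _ _ 0]) (auto simp: char3_family_def)
  qed
qed

lemma G_N3:
  assumes "diassociative (SC 1 0 0 0 0 1 0 0) B"
  shows "G (SC 1 0 0 0 0 1 0 0) B"
proof (cases B)
  case (SC p1 p2 p3 p4 q1 q2 q3 q4)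
  then show ?thesis using B_N3[of p1 p2 p3 p4 q1 q2 q3 q4] assms
    by (intro G_item[of 4 _ _ 0]) (auto simp: char3_family_def)
qed

lemma G_N5:
  fixes t :: "'a::field"
  assumes "diassociative (SC (-1) 0 0 t 0 (-1) (-1) 0) B" "(3::'a) = 0"
  shows "G (SC (-1) 0 0 t 0 (-1) (-1) 0) B"
proof (cases B)
  case (SC p1 p2 p3 p4 q1 q2 q3 q4)
  then show ?thesis using B_N5[of t p1 p2 p3 p4 q1 q2 q3 q4] assms(1) c3_two[OF assms(2)]
    by (intro G_item[of 8 _ _ t]) (auto simp: char3_family_def)
qed

lemma G_N4:
  fixes B :: "'a::field sc"
  assumes "diassociative (SC (-1) 0 0 0 0 0 (-1) 0) B" "(3::'a) = 0"
  shows "G (SC (-1) 0 0 0 0 0 (-1) 0) B"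
proof (cases B)
  case (SC p1 p2 p3 p4 q1 q2 q3 q4)
  then have h: "p1 = -1 \<and> p2 = 0 \<and> p3 = 0 \<and> p4 = 0 \<and> q4 = 0 \<and>
    ((q1 = 0 \<and> q2 = 0 \<and> q3 = -1) \<or> (q2 = 0 \<and> q3 = 0) \<or> (q1 = 0 \<and> q2 = -1 \<and> q3 = 0))"
    using B_N4[of p1 p2 p3 p4 q1 q2 q3 q4] assms by simp
  have two: "(2::'a) = -1" using c3_two[OF assms(2)] .
  show ?thesis
  proof (cases "q1 = 0 \<and> q2 = 0 \<and> q3 = -1")
    case True
    then show ?thesis using h SC two by (intro G_item[of 7 _ _ 0]) (auto simp: char3_family_def)
  next
    case F1: False
    show ?thesis
    proof (cases "q2 = 0 \<and> q3 = 0")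
      case True
      then show ?thesis using h SC two by (intro G_item[of 5 _ _ q1]) (auto simp: char3_family_def)
    next
      case False
      then show ?thesis using h SC two F1 by (intro G_item[of 6 _ _ 0]) (auto simp: char3_family_def)
    qed
  qed
qed



lemma G_unital:
  fixes a4 b4 :: "'a::field"
  assumes "diassociative (SC 1 0 0 a4 0 1 1 b4) B" "(3::'a) = 0"
  shows "G (SC 1 0 0 a4 0 1 1 b4) B"
proof -
  let ?u = "(-1, 0) :: 'a \<times> 'a" and ?v = "(b4, 1) :: 'a \<times> 'a"
  have d: "dt ?u ?v \<noteq> 0" by (simp add: dt_def)
  have three: "\<And>x::'a. 3 * x = 0" using assms(2) by simp
  have eq: "cb ?u ?v (SC 1 0 0 a4 0 1 1 b4) = SC (-1) 0 0 (-(a4 + b4*b4)) 0 (-1) (-1) 0"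
    by (simp add: cb_def crd_def dt_def scmul_def algebra_simps three assms(2))
  show ?thesis
    apply (rule G_cb[OF d])
    apply (subst eq)
    apply (rule G_N5[OF _ assms(2)])
    using diassoc_cb[OF d assms(1)] eq by simp
qed



lemma G_split:
  fixes q :: "'a::field"
  assumes "diassociative (SC 1 0 0 0 0 0 0 q) B" "(3::'a) = 0" "q \<noteq> 0"
  shows "G (SC 1 0 0 0 0 0 0 q) B"
proof -
  let ?u = "(1, 1/q) :: 'a \<times> 'a" and ?v = "(0, 1) :: 'a \<times> 'a"
  have d: "dt ?u ?v \<noteq> 0" by (simp add: dt_def)
  have eq: "cb ?u ?v (SC 1 0 0 0 0 0 0 q) = SC 1 0 0 0 0 1 1 q"
    using assms(3) by (simp add: cb_def crd_def dt_def scmul_def field_simps power2_eq_square)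
  show ?thesis
    apply (rule G_cb[OF d])
    apply (subst eq)
    apply (rule G_unital[OF _ assms(2)])
    using diassoc_cb[OF d assms(1)] eq by simp
qed

lemma G_idem:
  fixes a2 a3 a4 b2 b3 b4 :: "'a::field"
  assumes "diassociative (SC 1 a2 a3 a4 0 b2 b3 b4) B" "(3::'a) = 0"
  shows "G (SC 1 a2 a3 a4 0 b2 b3 b4) B"
proof -
  note f1 = dia1[OF assms(1), of "(1,0)" "(1,0)" "(0,1)"]
  note f2 = dia1[OF assms(1), of "(0,1)" "(1,0)" "(1,0)"]
  note f3 = dia1[OF assms(1), of "(1,0)" "(0,1)" "(1,0)"]
  note f4 = dia1[OF assms(1), of "(0,1)" "(1,0)" "(0,1)"]
  note f5 = dia1[OF assms(1), of "(1,0)" "(0,1)" "(0,1)"]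
  have h1: "a2 * b2 = 0" "b2 * b2 = b2" using f1 by (auto simp: scmul_def)
  have h2: "a3 * b3 = 0" "b3 * b3 = b3" using f2 by (auto simp: scmul_def)
  have h3: "a2 + b2*a3 = a3 + b3*a2" using f3 by (simp add: scmul_def)
  have h4: "b3 * a4 = b2 * a4" "a3 * b2 + b3 * b4 = a2 * b3 + b2 * b4" using f4 by (simp_all add: scmul_def algebra_simps)
  have h5: "a2 * a2 + b2 * a4 = a4 + a2 * b4" using f5 by (simp add: scmul_def algebra_simps)
  have idm: "\<And>x::'a. x * x = x \<Longrightarrow> x = 0 \<or> x = 1"
  proof -
    fix x :: 'a assume "x * x = x"
    then have "x * (x - 1) = 0" by (simp add: right_diff_distrib)
    then show "x = 0 \<or> x = 1" by simp
  qed
  have cb2: "b2 = 0 \<or> b2 = 1" using idm[OF h1(2)] .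
  have cb3: "b3 = 0 \<or> b3 = 1" using idm[OF h2(2)] .
  show ?thesis
  proof (cases "b2 = 1")
    case T2: True
    show ?thesis
    proof (cases "b3 = 1")
      case True
      then have "a2 = 0" "a3 = 0" using T2 h1 h2 by simp_all
      then show ?thesis using G_unital[of a4 b4 B] assms T2 True by simp
    next
      case False
      then have z: "b3 = 0" "a2 = 0" using cb3 T2 h1 by simp_all
      then have z2: "a4 = 0" "b4 = a3" using h4 T2 by simp_all
      let ?u = "(1, 0) :: 'a \<times> 'a" and ?v = "(-a3, 1) :: 'a \<times> 'a"
      have d: "dt ?u ?v \<noteq> 0" by (simp add: dt_def)
      have eq: "cb ?u ?v (SC 1 a2 a3 a4 0 b2 b3 b4) = SC 1 0 0 0 0 1 0 0"
        using z z2 T2 by (simp add: cb_def crd_def dt_def scmul_def algebra_simps)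
      show ?thesis
        apply (rule G_cb[OF d])
        apply (subst eq)
        apply (rule G_N3)
        using diassoc_cb[OF d assms(1)] eq by simp
    qed
  next
    case F2: False
    then have b2: "b2 = 0" using cb2 by simp
    show ?thesis
    proof (cases "b3 = 1")
      case True
      then have z: "a3 = 0" using h2 by simp
      then have z2: "a4 = 0" "b4 = a2" using h4 b2 True by simp_all
      let ?u = "(-1, 0) :: 'a \<times> 'a" and ?v = "(-a2, 1) :: 'a \<times> 'a"
      have d: "dt ?u ?v \<noteq> 0" by (simp add: dt_def)
      have eq: "cb ?u ?v (SC 1 a2 a3 a4 0 b2 b3 b4) = SC (-1) 0 0 0 0 0 (-1) 0"
        using z z2 b2 True by (simp add: cb_def crd_def dt_def scmul_def algebra_simps)
      show ?thesis
        apply (rule G_cb[OF d])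
        apply (subst eq)
        apply (rule G_N4[OF _ assms(2)])
        using diassoc_cb[OF d assms(1)] eq by simp
    next
      case False
      then have b3: "b3 = 0" using cb3 by simp
      then have z: "a3 = a2" using h3 b2 by simp
      have z2: "a4 = a2 * a2 - a2 * b4" using h5 b2 by (simp add: algebra_simps)
      let ?u = "(1, 0) :: 'a \<times> 'a" and ?v = "(-a2, 1) :: 'a \<times> 'a"
      have d: "dt ?u ?v \<noteq> 0" by (simp add: dt_def)
      have eq: "cb ?u ?v (SC 1 a2 a3 a4 0 b2 b3 b4) = SC 1 0 0 0 0 0 0 b4"
        using z z2 b2 b3 by (simp add: cb_def crd_def dt_def scmul_def algebra_simps)
      have dd: "diassociative (SC 1 0 0 0 0 0 0 b4) (cb ?u ?v B)"
        using diassoc_cb[OF d assms(1)] eq by simp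
      show ?thesis
        apply (rule G_cb[OF d])
        apply (subst eq)
      proof (cases "b4 = 0")
        case True
        then show "G (SC 1 0 0 0 0 0 0 b4) (cb ?u ?v B)" using G_N2 dd by simp
      next
        case False
        then show "G (SC 1 0 0 0 0 0 0 b4) (cb ?u ?v B)" using G_split[OF dd assms(2)] by simp
      qed
    qed
  qed
qed



lemma G_idem':
  fixes A B :: "'a::field sc"
  assumes "diassociative A B" "(3::'a) = 0" "al1 A = 1" "be1 A = 0"
  shows "G A B"
  using assms G_idem by (cases A) auto

lemma G_gen:
  fixes a2 a3 a4 b2 b3 b4 :: "'a::field"
  assumes "diassociative (SC 0 a2 a3 a4 1 b2 b3 b4) B" "(3::'a) = 0"
  shows "G (SC 0 a2 a3 a4 1 b2 b3 b4) B"
proof -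
  note f1 = dia1[OF assms(1), of "(1,0)" "(1,0)" "(1,0)"]
  note f2 = dia1[OF assms(1), of "(1,0)" "(1,0)" "(0,1)"]
  have h1: "a3 = a2" "b3 = b2" using f1 by (simp_all add: scmul_def)
  have h2: "a4 = a2 * b2" "b4 = a2 + b2 * b2" using f2 by (simp_all add: scmul_def algebra_simps)
  show ?thesis
  proof (cases "a2 = 0")
    case False
    let ?u = "(-b2/a2, 1/a2) :: 'a \<times> 'a" and ?v = "(1, 0) :: 'a \<times> 'a"
    have d: "dt ?u ?v \<noteq> 0" using False by (simp add: dt_def)
    have e: "al1 (cb ?u ?v (SC 0 a2 a3 a4 1 b2 b3 b4)) = 1" "be1 (cb ?u ?v (SC 0 a2 a3 a4 1 b2 b3 b4)) = 0"
      using h1 h2 False by (simp_all add: cb_def crd_def dt_def scmul_def field_simps power2_eq_square)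
    show ?thesis
      by (rule G_cb[OF d], rule G_idem'[OF diassoc_cb[OF d assms(1)] assms(2) e])
  next
    case a2: True
    show ?thesis
    proof (cases "b2 = 0")
      case False
      let ?u = "(0, 1/(b2*b2)) :: 'a \<times> 'a" and ?v = "(1, 0) :: 'a \<times> 'a"
      have d: "dt ?u ?v \<noteq> 0" using False by (simp add: dt_def)
      have e: "al1 (cb ?u ?v (SC 0 a2 a3 a4 1 b2 b3 b4)) = 1" "be1 (cb ?u ?v (SC 0 a2 a3 a4 1 b2 b3 b4)) = 0"
        using h1 h2 False a2 by (simp_all add: cb_def crd_def dt_def scmul_def field_simps power2_eq_square)
      show ?thesis
        by (rule G_cb[OF d], rule G_idem'[OF diassoc_cb[OF d assms(1)] assms(2) e])
    next
      case True
      then show ?thesis using G_N1 assms(1) h1 h2 a2 by simp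
    qed
  qed
qed

lemma G_gen':
  fixes A B :: "'a::field sc"
  assumes "diassociative A B" "(3::'a) = 0" "al1 A = 0" "be1 A = 1"
  shows "G A B"
  using assms G_gen by (cases A) auto

lemma G_main1:
  fixes A B :: "'a::field sc"
  assumes "diassociative A B" "(3::'a) = 0" "al1 A \<noteq> 0 \<or> be1 A \<noteq> 0"
  shows "G A B"
proof (cases "be1 A = 0")
  case True
  then have a1: "al1 A \<noteq> 0" using assms(3) by simp
  let ?u = "(1 / al1 A, 0) :: 'a \<times> 'a" and ?v = "(0, 1) :: 'a \<times> 'a"
  have d: "dt ?u ?v \<noteq> 0" using a1 by (simp add: dt_def)
  have e: "al1 (cb ?u ?v A) = 1" "be1 (cb ?u ?v A) = 0"
    using a1 True by (simp_all add: cb_def crd_def dt_def scmul_def field_simps power2_eq_square)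
  show ?thesis
    by (rule G_cb[OF d], rule G_idem'[OF diassoc_cb[OF d assms(1)] assms(2) e])
next
  case False
  let ?u = "(1, 0) :: 'a \<times> 'a" and ?v = "(al1 A, be1 A) :: 'a \<times> 'a"
  have d: "dt ?u ?v \<noteq> 0" using False by (simp add: dt_def)
  have e: "al1 (cb ?u ?v A) = 0" "be1 (cb ?u ?v A) = 1"
    using False by (simp_all add: cb_def crd_def dt_def scmul_def field_simps)
  show ?thesis
    by (rule G_cb[OF d], rule G_gen'[OF diassoc_cb[OF d assms(1)] assms(2) e])
qed

lemma G_top:
  fixes A B :: "'a::field sc"
  assumes "diassociative A B" "(3::'a) = 0" "\<exists>x y. scmul A x y \<noteq> (0, 0)"
  shows "G A B"
proof (cases "al1 A \<noteq> 0 \<or> be1 A \<noteq> 0")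
  case True
  then show ?thesis using G_main1 assms by blast
next
  case F1: False
  show ?thesis
  proof (cases "al4 A \<noteq> 0 \<or> be4 A \<noteq> 0")
    case True
    let ?u = "(0, 1) :: 'a \<times> 'a" and ?v = "(1, 0) :: 'a \<times> 'a"
    have d: "dt ?u ?v \<noteq> 0" by (simp add: dt_def)
    have e: "al1 (cb ?u ?v A) \<noteq> 0 \<or> be1 (cb ?u ?v A) \<noteq> 0"
      using True by (auto simp: cb_def crd_def dt_def scmul_def)
    show ?thesis
      by (rule G_cb[OF d], rule G_main1[OF diassoc_cb[OF d assms(1)] assms(2) e])
  next
    case F4: False
    show ?thesis
    proof (cases "al2 A + al3 A \<noteq> 0 \<or> be2 A + be3 A \<noteq> 0")
      case True
      let ?u = "(1, 1) :: 'a \<times> 'a" and ?v = "(0, 1) :: 'a \<times> 'a"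
      have d: "dt ?u ?v \<noteq> 0" by (simp add: dt_def)
      have e: "al1 (cb ?u ?v A) \<noteq> 0 \<or> be1 (cb ?u ?v A) \<noteq> 0"
        using True F1 F4 by (auto simp: cb_def crd_def dt_def scmul_def algebra_simps)
      show ?thesis
        by (rule G_cb[OF d], rule G_main1[OF diassoc_cb[OF d assms(1)] assms(2) e])
    next
      case False
      then have z: "al1 A = 0" "be1 A = 0" "al4 A = 0" "be4 A = 0" "al3 A = - al2 A" "be3 A = - be2 A"
        using F1 F4 by (simp_all add: eq_neg_iff_add_eq_0 add.commute)
      have g1: "al2 A * al2 A = 0" "al2 A * be2 A = 0"
        using dia1[OF assms(1), of "(1,0)" "(0,1)" "(0,1)"] z by (simp_all add: scmul_def)
      have g2: "be2 A * be2 A = 0"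
        using dia1[OF assms(1), of "(0,1)" "(1,0)" "(1,0)"] z by (simp_all add: scmul_def)
      have "al2 A = 0" "be2 A = 0" using g1 g2 by simp_all
      then have "\<forall>x y. scmul A x y = (0, 0)" using z by (simp add: scmul_def)
      then show ?thesis using assms(3) by blast
    qed
  qed
qed



definition nilp :: "'a::field sc \<Rightarrow> bool" where
  "nilp M \<longleftrightarrow> (\<forall>x y z. scmul M (scmul M x y) z = (0, 0))"
definition lu :: "'a::field sc \<Rightarrow> bool" where
  "lu M \<longleftrightarrow> (\<exists>u. \<forall>y. scmul M u y = y)"
definition ru :: "'a::field sc \<Rightarrow> bool" where
  "ru M \<longleftrightarrow> (\<exists>u. \<forall>y. scmul M y u = y)"

lemma transport:
  assumes gf: "\<And>x. g (f x) = x" and fg: "\<And>x. f (g x) = x" and f0: "f (0,0) = (0,0)"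
    and hom: "\<And>x y. f (scmul M x y) = scmul M' (f x) (f y)"
  shows "(nilp M \<longleftrightarrow> nilp M') \<and> (lu M \<longleftrightarrow> lu M') \<and> (ru M \<longleftrightarrow> ru M')"
proof -
  have g0: "g (0,0) = (0,0)" using gf[of "(0,0)"] f0 by simp
  have hom': "\<And>x y. scmul M' x y = f (scmul M (g x) (g y))"
    using hom fg by metis
  have n1: "nilp M \<Longrightarrow> nilp M'"
    unfolding nilp_def
  proof (intro allI)
    fix x y z assume a: "\<forall>x y z. scmul M (scmul M x y) z = (0, 0)"
    have "scmul M' (scmul M' x y) z = scmul M' (scmul M' (f (g x)) (f (g y))) (f (g z))" using fg by simp
    also have "\<dots> = f (scmul M (scmul M (g x) (g y)) (g z))" using hom by simp
    also have "\<dots> = (0,0)" using a[rule_format, of "g x" "g y" "g z"] f0 by simp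
    finally show "scmul M' (scmul M' x y) z = (0,0)" .
  qed
  have n2: "nilp M' \<Longrightarrow> nilp M"
    unfolding nilp_def
  proof (intro allI)
    fix x y z assume "\<forall>x y z. scmul M' (scmul M' x y) z = (0, 0)"
    then have "scmul M' (scmul M' (f x) (f y)) (f z) = (0,0)" by blast
    then have "f (scmul M (scmul M x y) z) = (0,0)" using hom by simp
    then show "scmul M (scmul M x y) z = (0,0)" using gf g0 by metis
  qed
  have l1: "lu M \<Longrightarrow> lu M'"
    unfolding lu_def
  proof -
    assume "\<exists>u. \<forall>y. scmul M u y = y"
    then obtain u where u: "\<forall>y. scmul M u y = y" by blast
    have "\<forall>y. scmul M' (f u) y = y"
    proof (rule allI)
      fix y
      have "scmul M' (f u) y = f (scmul M u (g y))" using hom' gf by simp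
      also have "\<dots> = y" using u[rule_format, of "g y"] fg by simp
      finally show "scmul M' (f u) y = y" .
    qed
    then show "\<exists>u. \<forall>y. scmul M' u y = y" by blast
  qed
  have l2: "lu M' \<Longrightarrow> lu M"
    unfolding lu_def
  proof -
    assume "\<exists>u. \<forall>y. scmul M' u y = y"
    then obtain u where u: "\<forall>y. scmul M' u y = y" by blast
    have "\<forall>y. scmul M (g u) y = y"
    proof
      fix y
      have "f (scmul M (g u) y) = scmul M' u (f y)" using hom fg by simp
      also have "\<dots> = f y" using u[rule_format, of "f y"] by simp
      finally show "scmul M (g u) y = y" using gf by metis
    qed
    then show "\<exists>u. \<forall>y. scmul M u y = y" by blast
  qed
  have r1: "ru M \<Longrightarrow> ru M'"
    unfolding ru_def
  proof -
    assume "\<exists>u. \<forall>y. scmul M y u = y"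
    then obtain u where u: "\<forall>y. scmul M y u = y" by blast
    have "\<forall>y. scmul M' y (f u) = y"
    proof (rule allI)
      fix y
      have "scmul M' y (f u) = f (scmul M (g y) u)" using hom' gf by simp
      also have "\<dots> = y" using u[rule_format, of "g y"] fg by simp
      finally show "scmul M' y (f u) = y" .
    qed
    then show "\<exists>u. \<forall>y. scmul M' y u = y" by blast
  qed
  have r2: "ru M' \<Longrightarrow> ru M"
    unfolding ru_def
  proof -
    assume "\<exists>u. \<forall>y. scmul M' y u = y"
    then obtain u where u: "\<forall>y. scmul M' y u = y" by blast
    have "\<forall>y. scmul M y (g u) = y"
    proof
      fix y
      have "f (scmul M y (g u)) = scmul M' (f y) u" using hom fg by simp
      also have "\<dots> = f y" using u[rule_format, of "f y"] by simp
      finally show "scmul M y (g u) = y" using gf by metis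
    qed
    then show "\<exists>u. \<forall>y. scmul M y u = y" by blast
  qed
  show ?thesis using n1 n2 l1 l2 r1 r2 by blast
qed

definition sig :: "'a::field sc \<times> 'a sc \<Rightarrow> bool \<times> bool \<times> bool \<times> bool \<times> bool" where
  "sig D = (nilp (fst D), lu (fst D), ru (fst D), lu (snd D), ru (snd D))"

lemma iso_sig:
  assumes "dialg_iso D E"
  shows "sig D = sig E"
proof -
  obtain a b c d where h: "a * d - b * c \<noteq> 0"
    "\<forall>x y. linmap a b c d (scmul (fst D) x y) = scmul (fst E) (linmap a b c d x) (linmap a b c d y) \<and>
             linmap a b c d (scmul (snd D) x y) = scmul (snd E) (linmap a b c d x) (linmap a b c d y)"
    using assms unfolding dialg_iso_def by blast
  obtain k where k: "k = a * d - b * c" by blast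
  have k0: "k \<noteq> 0" using h(1) k by simp
  let ?g = "linmap (d / k) (- b / k) (- c / k) (a / k)"
  have gf: "\<And>x. ?g (linmap a b c d x) = x"
  proof -
    fix x :: "'a \<times> 'a"
    show "?g (linmap a b c d x) = x"
      using k0 apply (cases x) apply (simp add: linmap_def field_simps) apply (simp add: k algebra_simps) done
  qed
  have fg: "\<And>x. linmap a b c d (?g x) = x"
  proof -
    fix x :: "'a \<times> 'a"
    show "linmap a b c d (?g x) = x"
      using k0 apply (cases x) apply (simp add: linmap_def field_simps) apply (simp add: k algebra_simps) done
  qed
  have f0: "linmap a b c d (0,0) = (0,0)" by (simp add: linmap_def)
  have t1: "(nilp (fst D) \<longleftrightarrow> nilp (fst E)) \<and> (lu (fst D) \<longleftrightarrow> lu (fst E)) \<and> (ru (fst D) \<longleftrightarrow> ru (fst E))"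
    by (rule transport[OF gf fg f0]) (use h(2) in blast)
  have t2: "(nilp (snd D) \<longleftrightarrow> nilp (snd E)) \<and> (lu (snd D) \<longleftrightarrow> lu (snd E)) \<and> (ru (snd D) \<longleftrightarrow> ru (snd E))"
    by (rule transport[OF gf fg f0]) (use h(2) in blast)
  show ?thesis unfolding sig_def using t1 t2 by simp
qed



lemma not_lu: "(\<And>u. scmul M u y \<noteq> y) \<Longrightarrow> \<not> lu M" unfolding lu_def by blast
lemma not_ru: "(\<And>u. scmul M y u \<noteq> y) \<Longrightarrow> \<not> ru M" unfolding ru_def by blast
lemma lu_I: "(\<And>y. scmul M u y = y) \<Longrightarrow> lu M" unfolding lu_def by blast
lemma ru_I: "(\<And>y. scmul M y u = y) \<Longrightarrow> ru M" unfolding ru_def by blast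
lemma not_nilp: "scmul M (scmul M x y) z \<noteq> (0,0) \<Longrightarrow> \<not> nilp M" unfolding nilp_def by blast

context
  fixes t :: "'a::field"
  assumes c3: "(3::'a) = 0"
begin

lemma two: "(2::'a) = -1" using c3_two[OF c3] .

lemma sig1: "sig (char3_family 1 t) = (True, False, False, False, False)"
proof -
  have "nilp (SC 0 0 0 0 (1::'a) 0 0 0)" unfolding nilp_def by (simp add: scmul_def)
  moreover have "\<not> lu (SC 0 0 0 0 (1::'a) 0 0 0)" by (rule not_lu[of _ "(1,0)"]) (simp add: scmul_def)
  moreover have "\<not> ru (SC 0 0 0 0 (1::'a) 0 0 0)" by (rule not_ru[of _ "(1,0)"]) (simp add: scmul_def)
  moreover have "\<not> lu (SC 0 0 0 0 t 0 0 0)" by (rule not_lu[of _ "(1,0)"]) (simp add: scmul_def)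
  moreover have "\<not> ru (SC 0 0 0 0 t 0 0 0)" by (rule not_ru[of _ "(1,0)"]) (simp add: scmul_def)
  ultimately show ?thesis by (simp add: sig_def char3_family_def)
qed

lemma sig2: "sig (char3_family 2 t) = (False, False, False, False, False)"
proof -
  have "\<not> nilp (SC 1 0 0 0 (0::'a) 0 0 0)" by (rule not_nilp[of _ "(1,0)" "(1,0)" "(1,0)"]) (simp add: scmul_def)
  moreover have "\<not> lu (SC 1 0 0 0 (0::'a) 0 0 0)" by (rule not_lu[of _ "(0,1)"]) (simp add: scmul_def)
  moreover have "\<not> ru (SC 1 0 0 0 (0::'a) 0 0 0)" by (rule not_ru[of _ "(0,1)"]) (simp add: scmul_def)
  ultimately show ?thesis by (simp add: sig_def char3_family_def)
qed

lemma sig3: "sig (char3_family 3 t) = (False, False, False, True, False)"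
proof -
  have "\<not> nilp (SC 1 0 0 0 (0::'a) 0 0 0)" by (rule not_nilp[of _ "(1,0)" "(1,0)" "(1,0)"]) (simp add: scmul_def)
  moreover have "\<not> lu (SC 1 0 0 0 (0::'a) 0 0 0)" by (rule not_lu[of _ "(0,1)"]) (simp add: scmul_def)
  moreover have "\<not> ru (SC 1 0 0 0 (0::'a) 0 0 0)" by (rule not_ru[of _ "(0,1)"]) (simp add: scmul_def)
  moreover have "lu (SC 1 0 0 0 (0::'a) 1 0 0)" by (rule lu_I[of _ "(1,0)"]) (simp add: scmul_def)
  moreover have "\<not> ru (SC 1 0 0 0 (0::'a) 1 0 0)" by (rule not_ru[of _ "(0,1)"]) (simp add: scmul_def)
  ultimately show ?thesis by (simp add: sig_def char3_family_def)
qed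

lemma sig4: "sig (char3_family 4 t) = (False, True, False, True, False)"
proof -
  have "\<not> nilp (SC 1 0 0 0 (0::'a) 1 0 0)" by (rule not_nilp[of _ "(1,0)" "(1,0)" "(1,0)"]) (simp add: scmul_def)
  moreover have "lu (SC 1 0 0 0 (0::'a) 1 0 0)" by (rule lu_I[of _ "(1,0)"]) (simp add: scmul_def)
  moreover have "\<not> ru (SC 1 0 0 0 (0::'a) 1 0 0)" by (rule not_ru[of _ "(0,1)"]) (simp add: scmul_def)
  ultimately show ?thesis by (simp add: sig_def char3_family_def)
qed

lemma sig5: "sig (char3_family 5 t) = (False, False, True, False, False)"
proof -
  have e: "char3_family 5 t = (SC (-1) 0 0 0 0 0 (-1) 0, SC (-1) 0 0 0 t 0 0 0)"
    by (simp add: char3_family_def two)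
  have "\<not> nilp (SC (-1) 0 0 0 (0::'a) 0 (-1) 0)" by (rule not_nilp[of _ "(1,0)" "(1,0)" "(1,0)"]) (simp add: scmul_def)
  moreover have "\<not> lu (SC (-1) 0 0 0 (0::'a) 0 (-1) 0)" by (rule not_lu[of _ "(0,1)"]) (simp add: scmul_def)
  moreover have "ru (SC (-1) 0 0 0 (0::'a) 0 (-1) 0)" by (rule ru_I[of _ "(-1,0)"]) (simp add: scmul_def)
  moreover have "\<not> lu (SC (-1) 0 0 0 t 0 0 0)" by (rule not_lu[of _ "(0,1)"]) (simp add: scmul_def)
  moreover have "\<not> ru (SC (-1) 0 0 0 t 0 0 0)" by (rule not_ru[of _ "(0,1)"]) (simp add: scmul_def)
  ultimately show ?thesis by (simp add: sig_def e)
qed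

lemma sig6: "sig (char3_family 6 t) = (False, False, True, True, False)"
proof -
  have e: "char3_family 6 t = (SC (-1) 0 0 0 0 0 (-1) 0, SC (-1) 0 0 0 0 (-1) 0 0)"
    by (simp add: char3_family_def two)
  have "\<not> nilp (SC (-1) 0 0 0 (0::'a) 0 (-1) 0)" by (rule not_nilp[of _ "(1,0)" "(1,0)" "(1,0)"]) (simp add: scmul_def)
  moreover have "\<not> lu (SC (-1) 0 0 0 (0::'a) 0 (-1) 0)" by (rule not_lu[of _ "(0,1)"]) (simp add: scmul_def)
  moreover have "ru (SC (-1) 0 0 0 (0::'a) 0 (-1) 0)" by (rule ru_I[of _ "(-1,0)"]) (simp add: scmul_def)
  moreover have "lu (SC (-1) 0 0 0 (0::'a) (-1) 0 0)" by (rule lu_I[of _ "(-1,0)"]) (simp add: scmul_def)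
  moreover have "\<not> ru (SC (-1) 0 0 0 (0::'a) (-1) 0 0)" by (rule not_ru[of _ "(0,1)"]) (simp add: scmul_def)
  ultimately show ?thesis by (simp add: sig_def e)
qed

lemma sig7: "sig (char3_family 7 t) = (False, False, True, False, True)"
proof -
  have e: "char3_family 7 t = (SC (-1) 0 0 0 0 0 (-1) 0, SC (-1) 0 0 0 0 0 (-1) 0)"
    by (simp add: char3_family_def two)
  have "\<not> nilp (SC (-1) 0 0 0 (0::'a) 0 (-1) 0)" by (rule not_nilp[of _ "(1,0)" "(1,0)" "(1,0)"]) (simp add: scmul_def)
  moreover have "\<not> lu (SC (-1) 0 0 0 (0::'a) 0 (-1) 0)" by (rule not_lu[of _ "(0,1)"]) (simp add: scmul_def)
  moreover have "ru (SC (-1) 0 0 0 (0::'a) 0 (-1) 0)" by (rule ru_I[of _ "(-1,0)"]) (simp add: scmul_def)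
  ultimately show ?thesis by (simp add: sig_def e)
qed

lemma sig8: "sig (char3_family 8 t) = (False, True, True, True, True)"
proof -
  have e: "char3_family 8 t = (SC (-1) 0 0 t 0 (-1) (-1) 0, SC (-1) 0 0 t 0 (-1) (-1) 0)"
    by (simp add: char3_family_def two)
  have "\<not> nilp (SC (-1) 0 0 t 0 (-1) (-1) 0)" by (rule not_nilp[of _ "(1,0)" "(1,0)" "(1,0)"]) (simp add: scmul_def)
  moreover have "lu (SC (-1) 0 0 t 0 (-1) (-1) 0)" by (rule lu_I[of _ "(-1,0)"]) (simp add: scmul_def)
  moreover have "ru (SC (-1) 0 0 t 0 (-1) (-1) 0)" by (rule ru_I[of _ "(-1,0)"]) (simp add: scmul_def)
  ultimately show ?thesis by (simp add: sig_def e)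
qed

end

theorem mainTheorem6:
  assumes "CHAR('a::field) = 3"
  shows "(\<forall>A B :: 'a sc. diassociative A B \<and> (\<exists>x y. scmul A x y \<noteq> (0, 0)) \<longrightarrow>
            (\<exists>k \<in> {1..8}. \<exists>D. in_item k D \<and> dialg_iso (A, B) D))
       \<and> (\<forall>i j D E. i \<in> {1..8} \<and> j \<in> {1..8} \<and> i \<noteq> j \<and> in_item i D \<and> in_item j E
            \<longrightarrow> \<not> dialg_iso D (E :: 'a sc \<times> 'a sc))"
proof -
  have c3: "(3::'a) = 0"
  proof -
    have "(of_nat CHAR('a) :: 'a) = 0" by (rule of_nat_CHAR)
    then show ?thesis using assms by simp
  qed
  have part1: "\<forall>A B :: 'a sc. diassociative A B \<and> (\<exists>x y. scmul A x y \<noteq> (0, 0)) \<longrightarrow>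
            (\<exists>k \<in> {1..8}. \<exists>D. in_item k D \<and> dialg_iso (A, B) D)"
    using G_top[OF _ c3] unfolding G_def by blast
  have part2: "\<forall>i j D E. i \<in> {1..8} \<and> j \<in> {1..8} \<and> i \<noteq> j \<and> in_item i D \<and> in_item j E
            \<longrightarrow> \<not> dialg_iso D (E :: 'a sc \<times> 'a sc)"
  proof (intro allI impI)
    fix i j :: nat and D E :: "'a sc \<times> 'a sc"
    assume a: "i \<in> {1..8} \<and> j \<in> {1..8} \<and> i \<noteq> j \<and> in_item i D \<and> in_item j E"
    then obtain t s where D: "D = char3_family i t" and E: "E = char3_family j s"
      unfolding in_item_def by blast
    have i8: "i = 1 \<or> i = 2 \<or> i = 3 \<or> i = 4 \<or> i = 5 \<or> i = 6 \<or> i = 7 \<or> i = 8" using a by auto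
    have j8: "j = 1 \<or> j = 2 \<or> j = 3 \<or> j = 4 \<or> j = 5 \<or> j = 6 \<or> j = 7 \<or> j = 8" using a by auto
    note S = sig1[OF c3] sig2[OF c3] sig3[OF c3] sig4[OF c3] sig5[OF c3] sig6[OF c3] sig7[OF c3] sig8[OF c3]
    have "sig D \<noteq> sig E"
      unfolding D E using i8 j8 a S by auto
    then show "\<not> dialg_iso D E" using iso_sig by blast
  qed
  show ?thesis using part1 part2 by blast
qed


end
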